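(* InpHT achieves $\epsilon$-LDP, and with constant probability we have for any target $k$-way marginal $\beta$ \[ \|\mathcal{C}^\beta(t) - \mathcal{C}^\beta(t^* )\|_1 = \tilde{O}\left(\frac{(2d)^{k/2}}{\epsilon \sqrt{N}}\right).\]
   Context: There are $N$ users; user $i$ holds a vector in $\{0,1\}^d$, represented as an indicator vector $t_i\in\{0,1\}^{2^d}$ with a single 1 at index $j_i$, and $t=\sum_{i=1}^N t_i/N$. A mechanism $F$ is $\epsilon$-LDP if for all pairs of such indicator inputs $t_i,t'_i$ and every output $R$, $\Pr[F(t_i)=R]\le e^{\epsilon}\Pr[F(t'_i)=R]$. For $\beta\in\{0,1\}^d$ with $k$ ones, the $k$-way marginal is $\mathcal{C}^\beta(t)[\gamma]=\sum_{\eta:\eta\wedge\beta=\gamma} t[\eta]$. The Hadamard transform is $\theta=\phi t$ with $\phi_{a,b}=2^{-d/2}(-1)^{|a\wedge b|}$; any $k$-way marginal can be computed from the coefficients $\theta_\alpha$ with $|\alpha|\le k$ via $\mathcal{C}^\beta(t)_\gamma=\sum_{\alpha:\,\alpha\wedge\beta=\alpha}\theta_\alpha\sum_{\eta:\eta\wedge\beta=\gamma}\phi_{\alpha,\eta}$. Let $T=\sum_{\ell=1}^{k}\binom{d}{\ell}=O(d^k)$ be the number of these needed coefficients. The algorithm InpHT: each user samples one of these $T$ coefficient indices $\ell$ uniformly, computes the scaled coefficient $(-1)^{|j_i\wedge \ell|}\in\{-1,1\}$, and reports it via randomized response with $p_r=e^{\epsilon}/(1+e^{\epsilon})$ together with $\ell$.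 The aggregator averages the reports for each coefficient, divides by $(2p_r-1)$, rescales by $2^{-d/2}$ to get unbiased estimates $\hat\theta_\ell$ (the 0th coefficient is fixed to its known value), and reconstructs any marginal $\mathcal{C}^\beta(t^* )$ from these estimates by the formula above. $\tilde{O}$ suppresses logarithmic factors; $N$ is assumed sufficiently large. *)

theory Defs
  imports "HOL-Probability.Probability"
begin

text \<open>Vectors in {0,1}^d are represented as subsets of {..<d} (the set of coordinates equal to 1).
  Thus a \<and> b is intersection and |a \<and> b| is the cardinality of the intersection.\<close>

definition coef_set :: "nat \<Rightarrow> nat \<Rightarrow> nat set set" where
  "coef_set d k = {\<alpha>. \<alpha> \<subseteq> {..<d} \<and> 1 \<le> card \<alpha> \<and> card \<alpha> \<le> k}"

definition num_coefs :: "nat \<Rightarrow> nat \<Rightarrow> nat" where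
  "num_coefs d k = (\<Sum>l = 1..k. d choose l)"

definition p_r :: "real \<Rightarrow> real" where
  "p_r \<epsilon> = exp \<epsilon> / (1 + exp \<epsilon>)"

definition sgn_coef :: "nat set \<Rightarrow> nat set \<Rightarrow> int" where
  "sgn_coef J l = (-1) ^ card (J \<inter> l)"

definition inpht_user :: "nat \<Rightarrow> nat \<Rightarrow> real \<Rightarrow> nat set \<Rightarrow> (nat set \<times> int) pmf" where
  "inpht_user d k \<epsilon> J =
     bind_pmf (pmf_of_set (coef_set d k))
       (\<lambda>l. map_pmf (\<lambda>b. (l, if b then sgn_coef J l else - sgn_coef J l))
                     (bernoulli_pmf (p_r \<epsilon>)))"

definition is_LDP :: "real \<Rightarrow> 'a set \<Rightarrow> ('a \<Rightarrow> 'b pmf) \<Rightarrow> bool" where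
  "is_LDP \<epsilon> X F \<longleftrightarrow> (\<forall>x\<in>X. \<forall>x'\<in>X. \<forall>R. pmf (F x) R \<le> exp \<epsilon> * pmf (F x') R)"

definition inpht_reports :: "nat \<Rightarrow> nat \<Rightarrow> real \<Rightarrow> nat \<Rightarrow> (nat \<Rightarrow> nat set)
    \<Rightarrow> (nat \<Rightarrow> nat set \<times> int) pmf" where
  "inpht_reports d k \<epsilon> N j = Pi_pmf {..<N} ({}, 0) (\<lambda>i. inpht_user d k \<epsilon> (j i))"

definition had :: "nat \<Rightarrow> nat set \<Rightarrow> nat set \<Rightarrow> real" where
  "had d a b = 2 powr (- (real d / 2)) * (-1) ^ card (a \<inter> b)"

definition hist :: "nat \<Rightarrow> (nat \<Rightarrow> nat set) \<Rightarrow> nat set \<Rightarrow> real" where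
  "hist N j \<eta> = real (card {i\<in>{..<N}. j i = \<eta>}) / real N"

definition marginal :: "nat \<Rightarrow> (nat set \<Rightarrow> real) \<Rightarrow> nat set \<Rightarrow> nat set \<Rightarrow> real" where
  "marginal d tv \<beta> \<gamma> = (\<Sum>\<eta>\<in>{\<eta>\<in>Pow {..<d}. \<eta> \<inter> \<beta> = \<gamma>}. tv \<eta>)"

text \<open>Aggregator estimate of theta_alpha from the reports R: average of the reports for
  coefficient alpha, divided by (2 p_r - 1), rescaled by 2^{-d/2}; the 0th coefficient is fixed
  to its known value 2^{-d/2}; a coefficient nobody reported is estimated as 0.\<close>
definition theta_hat :: "nat \<Rightarrow> real \<Rightarrow> nat \<Rightarrow> (nat \<Rightarrow> nat set \<times> int) \<Rightarrow> nat set \<Rightarrow> real" where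
  "theta_hat d \<epsilon> N R \<alpha> =
     (if \<alpha> = {} then 2 powr (- (real d / 2))
      else (let S = {i\<in>{..<N}. fst (R i) = \<alpha>} in
            if S = {} then 0
            else 2 powr (- (real d / 2)) *
                 ((\<Sum>i\<in>S. real_of_int (snd (R i))) / real (card S)) / (2 * p_r \<epsilon> - 1)))"

definition recon_marginal :: "nat \<Rightarrow> (nat set \<Rightarrow> real) \<Rightarrow> nat set \<Rightarrow> nat set \<Rightarrow> real" where
  "recon_marginal d \<theta> \<beta> \<gamma> =
     (\<Sum>\<alpha>\<in>Pow \<beta>. \<theta> \<alpha> * (\<Sum>\<eta>\<in>{\<eta>\<in>Pow {..<d}. \<eta> \<inter> \<beta> = \<gamma>}. had d \<alpha> \<eta>))"

definition marginal_l1_err :: "nat \<Rightarrow> real \<Rightarrow> nat \<Rightarrow> (nat \<Rightarrow> nat set)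
    \<Rightarrow> (nat \<Rightarrow> nat set \<times> int) \<Rightarrow> nat set \<Rightarrow> real" where
  "marginal_l1_err d \<epsilon> N j R \<beta> =
     (\<Sum>\<gamma>\<in>Pow {..<d}. \<bar>marginal d (hist N j) \<beta> \<gamma>
                         - recon_marginal d (theta_hat d \<epsilon> N R) \<beta> \<gamma>\<bar>)"

end

theory Submission
  imports Defs
begin


lemma p_r_bounds: "0 < p_r e" "p_r e < 1"
  unfolding p_r_def using exp_gt_zero[of e] by (auto simp: divide_simps add_pos_pos)

lemma sgn_coef_cases: "sgn_coef J l = 1 \<or> sgn_coef J l = -1"
  unfolding sgn_coef_def by (cases "even (card (J \<inter> l))") auto

definition qf :: "real \<Rightarrow> nat set \<Rightarrow> nat set \<Rightarrow> int \<Rightarrow> real" where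
  "qf e J l v = (if v = sgn_coef J l then p_r e else if v = - sgn_coef J l then 1 - p_r e else 0)"

lemma pmf_user:
  "pmf (inpht_user d k e J) (l, v) = pmf (pmf_of_set (coef_set d k)) l * qf e J l v"
proof -
  let ?D = "pmf_of_set (coef_set d k)"
  let ?g = "\<lambda>l'. pmf (map_pmf (\<lambda>b. (l', if b then sgn_coef J l' else - sgn_coef J l')) (bernoulli_pmf (p_r e))) (l, v)"
  have z: "?g l' = 0" if "l' \<noteq> l" for l'
    using that by (auto simp: pmf_eq_0_set_pmf)
  have gl: "?g l = qf e J l v"
  proof -
    have s: "sgn_coef J l \<noteq> - sgn_coef J l" using sgn_coef_cases[of J l] by auto
    have "?g l = measure_pmf.prob (bernoulli_pmf (p_r e)) {b. (if b then sgn_coef J l else - sgn_coef J l) = v}"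
      by (simp add: pmf_map vimage_def)
    also have "\<dots> = qf e J l v"
    proof -
      consider "v = sgn_coef J l" | "v = - sgn_coef J l" | "v \<noteq> sgn_coef J l \<and> v \<noteq> - sgn_coef J l" by blast
      then show ?thesis
      proof cases
        case 1
        then have "{b. (if b then sgn_coef J l else - sgn_coef J l) = v} = {True}" using s by auto
        then show ?thesis using 1 p_r_bounds[of e] by (simp add: measure_pmf_single qf_def)
      next
        case 2
        then have "{b. (if b then sgn_coef J l else - sgn_coef J l) = v} = {False}" using s by auto
        then show ?thesis using 2 s p_r_bounds[of e] by (simp add: measure_pmf_single qf_def)
      next
        case 3
        then have "{b. (if b then sgn_coef J l else - sgn_coef J l) = v} = {}" by auto
        then show ?thesis using 3 by (simp add: qf_def)
      qed
    qed
    finally show ?thesis .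
  qed
  have "pmf (inpht_user d k e J) (l, v) = (\<integral>l'. ?g l' \<partial>?D)"
    unfolding inpht_user_def pmf_bind by simp
  also have "\<dots> = (\<Sum>a\<in>{l}. ?g a * pmf ?D a)"
    by (rule integral_measure_pmf_real) (use z in auto)
  finally show ?thesis using gl by simp
qed

lemma qf_ldp:
  assumes "0 < e"
  shows "qf e J l v \<le> exp e * qf e J' l v"
proof -
  have E1: "1 \<le> exp e" using assms by simp
  have ne: "1 + exp e > 0" using exp_gt_zero[of e] by linarith
  have q: "1 - p_r e = 1 / (1 + exp e)" unfolding p_r_def using ne by (simp add: field_simps)
  have pe: "p_r e = exp e * (1 - p_r e)" unfolding q unfolding p_r_def by simp
  have a: "1 - p_r e \<le> exp e * p_r e"
  proof -
    have "1 \<le> exp e * exp e" using E1 by (metis mult_mono' mult_1 zero_le_one)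
    then have "1 / (1 + exp e) \<le> exp e * exp e / (1 + exp e)" using ne by (simp add: divide_right_mono)
    then show ?thesis unfolding q unfolding p_r_def by simp
  qed
  have b: "p_r e \<le> exp e * p_r e" using p_r_bounds[of e] E1 by simp
  have c: "1 - p_r e \<le> exp e * (1 - p_r e)" using p_r_bounds[of e] E1 by simp
  have s1: "sgn_coef J l \<noteq> - sgn_coef J l" "sgn_coef J' l \<noteq> - sgn_coef J' l"
    using sgn_coef_cases[of J l] sgn_coef_cases[of J' l] by auto
  have s2: "sgn_coef J l = sgn_coef J' l \<or> sgn_coef J l = - sgn_coef J' l"
    using sgn_coef_cases[of J l] sgn_coef_cases[of J' l] by auto
  show ?thesis
    using s2
  proof
    assume h: "sgn_coef J l = sgn_coef J' l"
    show ?thesis unfolding qf_def h using b c by simp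
  next
    assume h: "sgn_coef J l = - sgn_coef J' l"
    show ?thesis unfolding qf_def h using a pe s1 by (auto simp del: neg_equal_iff_equal)
  qed
qed

lemma part1: "\<forall>d k \<epsilon>. 0 < \<epsilon> \<longrightarrow> is_LDP \<epsilon> (Pow {..<d}) (inpht_user d k \<epsilon>)"
  unfolding is_LDP_def
proof (intro allI impI ballI)
  fix d k and e :: real and x x' and R :: "nat set \<times> int"
  assume "0 < e"
  obtain l v where R: "R = (l, v)" by (cases R)
  have "pmf (pmf_of_set (coef_set d k)) l * qf e x l v \<le> pmf (pmf_of_set (coef_set d k)) l * (exp e * qf e x' l v)"
    by (intro mult_left_mono qf_ldp \<open>0 < e\<close>) simp
  then show "pmf (inpht_user d k e x) R \<le> exp e * pmf (inpht_user d k e x') R"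
    unfolding R pmf_user by (simp add: algebra_simps)
qed



lemma exp_quad: fixes y :: real assumes "\<bar>y\<bar> \<le> 1" shows "exp y \<le> 1 + y + y^2"
proof (cases "0 \<le> y")
  case True then show ?thesis using exp_bound[of y] assms by auto
next
  case False
  define z where "z = - y"
  have z: "0 \<le> z" "z \<le> 1" using False assms unfolding z_def by auto
  have "1 + z + z^2/2 \<le> exp z" using exp_lower_Taylor_quadratic z by simp
  moreover have "0 < 1 - z + z^2"
  proof (cases "z < 1")
    case True then show ?thesis using zero_le_power2[of z] by linarith
  next
    case False then have "z = 1" using z by simp
    then show ?thesis by simp
  qed
  ultimately have "(1 + z + z^2/2) * (1 - z + z^2) \<le> exp z * (1 - z + z^2)"
    by (intro mult_right_mono) auto
  moreover have "(1 + z + z^2/2) * (1 - z + z^2) = 1 + z^2/2 + z^3/2 + z^4/2"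
    by (simp add: power2_eq_square power3_eq_cube power4_eq_xxxx field_simps)
  moreover have "0 \<le> z^2/2 + z^3/2 + z^4/2" using z by simp
  ultimately have "1 \<le> exp z * (1 - z + z^2)" by linarith
  then have "exp (-z) \<le> 1 - z + z^2"
    by (simp add: exp_minus field_simps)
  then show ?thesis unfolding z_def by simp
qed

lemma chernoff:
  fixes ps :: "nat \<Rightarrow> 'a pmf" and f :: "nat \<Rightarrow> 'a \<Rightarrow> real" and l :: real
  assumes fin: "\<And>i. i < N \<Longrightarrow> finite (set_pmf (ps i))"
  and bnd: "\<And>i x. i < N \<Longrightarrow> x \<in> set_pmf (ps i) \<Longrightarrow> \<bar>f i x\<bar> \<le> 1"
  and var: "\<And>i. i < N \<Longrightarrow> measure_pmf.expectation (ps i) (\<lambda>x. (f i x)^2) \<le> s"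
  and lam: "0 \<le> l" "l \<le> 1"
  shows "measure_pmf.prob (Pi_pmf {..<N} dflt ps)
           {R. a \<le> (\<Sum>i<N. f i (R i) - measure_pmf.expectation (ps i) (f i))}
         \<le> exp (- l * a + l^2 * (real N * s))"
proof -
  define m where "m i = measure_pmf.expectation (ps i) (f i)" for i
  define P where "P = Pi_pmf {..<N} dflt ps"
  have single: "measure_pmf.expectation (ps i) (\<lambda>x. exp (l * (f i x - m i))) \<le> exp (l^2 * s)"
    if i: "i < N" for i
  proof -
    have int: "integrable (measure_pmf (ps i)) h" for h :: "'a \<Rightarrow> real"
      using fin[OF i] by (rule integrable_measure_pmf_finite)
    have "measure_pmf.expectation (ps i) (\<lambda>x. exp (l * f i x))
          \<le> measure_pmf.expectation (ps i) (\<lambda>x. 1 + l * f i x + l^2 * (f i x)^2)"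
    proof (rule integral_mono_AE[OF int int])
      show "AE x in measure_pmf (ps i). exp (l * f i x) \<le> 1 + l * f i x + l^2 * (f i x)^2"
      proof (rule AE_pmfI)
        fix x assume "x \<in> set_pmf (ps i)"
        then have "\<bar>f i x\<bar> \<le> 1" using bnd i by auto
        then have "\<bar>l * f i x\<bar> \<le> 1" using lam by (simp add: abs_mult mult_le_one)
        from exp_quad[OF this] show "exp (l * f i x) \<le> 1 + l * f i x + l^2 * (f i x)^2"
          by (simp add: power_mult_distrib)
      qed
    qed
    also have "\<dots> = 1 + l * m i + l^2 * measure_pmf.expectation (ps i) (\<lambda>x. (f i x)^2)"
      unfolding m_def using int by simp
    also have "\<dots> \<le> 1 + l * m i + l^2 * s"
      using var[OF i] by (simp add: mult_left_mono)
    also have "\<dots> \<le> exp (l * m i + l^2 * s)"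
      using exp_ge_add_one_self by (simp add: add.assoc)
    finally have A: "measure_pmf.expectation (ps i) (\<lambda>x. exp (l * f i x)) \<le> exp (l * m i + l^2 * s)" .
    have "measure_pmf.expectation (ps i) (\<lambda>x. exp (l * (f i x - m i)))
        = exp (- (l * m i)) * measure_pmf.expectation (ps i) (\<lambda>x. exp (l * f i x))"
      by (simp add: right_diff_distrib exp_diff exp_minus field_simps)
    also have "\<dots> \<le> exp (- (l * m i)) * exp (l * m i + l^2 * s)"
      using A by (simp add: mult_left_mono)
    also have "\<dots> = exp (l^2 * s)" by (simp add: exp_add[symmetric])
    finally show ?thesis .
  qed
  have finP: "finite (set_pmf P)"
    unfolding P_def by (subst set_Pi_pmf) (auto intro!: finite_PiE_dflt fin)
  define U where "U R = (\<Prod>i<N. exp (l * (f i (R i) - m i)))" for R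
  have EU: "measure_pmf.expectation P U \<le> exp (l^2 * (real N * s))"
  proof -
    have "measure_pmf.expectation P U = (\<Prod>i<N. measure_pmf.expectation (ps i) (\<lambda>x. exp (l * (f i x - m i))))"
      unfolding P_def U_def
      by (rule expectation_prod_Pi_pmf) (auto intro: integrable_measure_pmf_finite fin)
    also have "\<dots> \<le> (\<Prod>i<N. exp (l^2 * s))"
      by (rule prod_mono) (auto intro: single)
    also have "\<dots> = exp (l^2 * (real N * s))"
      by (simp add: exp_of_nat_mult[symmetric] algebra_simps)
    finally show ?thesis .
  qed
  have sub: "{R. a \<le> (\<Sum>i<N. f i (R i) - m i)} \<subseteq> {R. exp (l * a) \<le> U R}"
  proof
    fix R assume "R \<in> {R. a \<le> (\<Sum>i<N. f i (R i) - m i)}"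
    then have "l * a \<le> l * (\<Sum>i<N. f i (R i) - m i)" using lam by (simp add: mult_left_mono)
    then have "exp (l * a) \<le> exp (l * (\<Sum>i<N. f i (R i) - m i))" by simp
    also have "\<dots> = U R" unfolding U_def by (simp add: sum_distrib_left exp_sum)
    finally show "R \<in> {R. exp (l * a) \<le> U R}" by simp
  qed
  have "measure_pmf.prob P {R. a \<le> (\<Sum>i<N. f i (R i) - m i)} \<le> measure_pmf.prob P {R. exp (l * a) \<le> U R}"
    using sub by (rule measure_pmf.finite_measure_mono) simp
  also have "\<dots> \<le> measure_pmf.expectation P U / exp (l * a)"
  proof -
    have intU: "integrable (measure_pmf P) U" using finP by (rule integrable_measure_pmf_finite)
    have nn: "AE x in measure_pmf P. 0 \<le> U x" unfolding U_def by (simp add: prod_nonneg)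
    show ?thesis using integral_Markov_inequality_measure[OF intU _ nn, of "{}" "exp (l * a)"] by simp
  qed
  also have "\<dots> \<le> exp (l^2 * (real N * s)) / exp (l * a)"
    using EU by (simp add: divide_right_mono)
  also have "\<dots> = exp (- l * a + l^2 * (real N * s))"
    by (simp add: exp_diff[symmetric])
  finally show ?thesis unfolding P_def m_def .
qed



lemma sign_sum:
  assumes "finite \<beta>"
  shows "(\<Sum>\<alpha>\<in>Pow \<beta>. (-1::real) ^ (card (A \<inter> \<alpha>) + card (B \<inter> \<alpha>)))
         = (if A \<inter> \<beta> = B \<inter> \<beta> then 2 ^ card \<beta> else 0)"
  using assms
proof (induction \<beta> rule: finite_induct)
  case empty
  then show ?case by simp
next
  case (insert x F)
  let ?f = "\<lambda>\<alpha>. (-1::real) ^ (card (A \<inter> \<alpha>) + card (B \<inter> \<alpha>))"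
  have fin: "finite (Pow F)" using insert by simp
  have disj: "Pow F \<inter> insert x ` Pow F = {}" using insert by auto
  have inj: "inj_on (insert x) (Pow F)"
  proof (rule inj_onI)
    fix a b assume "a \<in> Pow F" "b \<in> Pow F" "insert x a = insert x b"
    then show "a = b" using insert(2) by (metis Diff_insert_absorb PowD subsetD)
  qed
  have ins: "?f (insert x \<alpha>) = (if x \<in> A then -1 else 1) * (if x \<in> B then -1 else 1) * ?f \<alpha>"
    if "\<alpha> \<in> Pow F" for \<alpha>
  proof -
    have xa: "x \<notin> \<alpha>" "finite \<alpha>" using that insert finite_subset by auto
    have cA: "card (A \<inter> insert x \<alpha>) = (if x \<in> A then Suc (card (A \<inter> \<alpha>)) else card (A \<inter> \<alpha>))"
      using xa by (auto simp: Int_insert_right)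
    have cB: "card (B \<inter> insert x \<alpha>) = (if x \<in> B then Suc (card (B \<inter> \<alpha>)) else card (B \<inter> \<alpha>))"
      using xa by (auto simp: Int_insert_right)
    show ?thesis unfolding cA cB by (simp add: power_add)
  qed
  have "(\<Sum>\<alpha>\<in>Pow (insert x F). ?f \<alpha>) = (\<Sum>\<alpha>\<in>Pow F. ?f \<alpha>) + (\<Sum>\<alpha>\<in>insert x ` Pow F. ?f \<alpha>)"
    unfolding Pow_insert using fin disj by (intro sum.union_disjoint) auto
  also have "(\<Sum>\<alpha>\<in>insert x ` Pow F. ?f \<alpha>) = (\<Sum>\<alpha>\<in>Pow F. ?f (insert x \<alpha>))"
    using inj by (rule sum.reindex[unfolded comp_def])
  also have "\<dots> = (if x \<in> A then -1 else 1) * (if x \<in> B then -1 else 1) * (\<Sum>\<alpha>\<in>Pow F. ?f \<alpha>)"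
    using ins by (simp add: sum_distrib_left)
  finally have eq: "(\<Sum>\<alpha>\<in>Pow (insert x F). ?f \<alpha>) = (1 + (if x \<in> A then -1 else 1) * (if x \<in> B then -1 else 1)) * (\<Sum>\<alpha>\<in>Pow F. ?f \<alpha>)"
    by (simp add: algebra_simps)
  have iff: "(A \<inter> insert x F = B \<inter> insert x F) \<longleftrightarrow> ((x \<in> A \<longleftrightarrow> x \<in> B) \<and> A \<inter> F = B \<inter> F)"
    by blast
  show ?case unfolding eq insert.IH iff using insert by auto
qed

lemma card_fiber:
  assumes "\<beta> \<subseteq> {..<d}" "\<gamma> \<subseteq> \<beta>"
  shows "card {\<eta>\<in>Pow {..<d}. \<eta> \<inter> \<beta> = \<gamma>} = 2 ^ (d - card \<beta>)"
proof -
  have eq: "{\<eta>\<in>Pow {..<d}. \<eta> \<inter> \<beta> = \<gamma>} = (\<lambda>\<rho>. \<rho> \<union> \<gamma>) ` Pow ({..<d} - \<beta>)"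
  proof
    show "{\<eta> \<in> Pow {..<d}. \<eta> \<inter> \<beta> = \<gamma>} \<subseteq> (\<lambda>\<rho>. \<rho> \<union> \<gamma>) ` Pow ({..<d} - \<beta>)"
    proof
      fix \<eta> assume h: "\<eta> \<in> {\<eta> \<in> Pow {..<d}. \<eta> \<inter> \<beta> = \<gamma>}"
      then have "\<eta> = (\<eta> - \<beta>) \<union> \<gamma>" "\<eta> - \<beta> \<in> Pow ({..<d} - \<beta>)" by auto
      then show "\<eta> \<in> (\<lambda>\<rho>. \<rho> \<union> \<gamma>) ` Pow ({..<d} - \<beta>)" by blast
    qed
  qed (use assms in auto)
  have inj: "inj_on (\<lambda>\<rho>. \<rho> \<union> \<gamma>) (Pow ({..<d} - \<beta>))"
  proof (rule inj_onI)
    fix x y assume "x \<in> Pow ({..<d} - \<beta>)" "y \<in> Pow ({..<d} - \<beta>)" "x \<union> \<gamma> = y \<union> \<gamma>"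
    then have "(x \<union> \<gamma>) - \<beta> = x" "(y \<union> \<gamma>) - \<beta> = y" using assms by auto
    then show "x = y" using \<open>x \<union> \<gamma> = y \<union> \<gamma>\<close> by metis
  qed
  have "card ({..<d} - \<beta>) = d - card \<beta>"
    using assms by (simp add: card_Diff_subset finite_subset)
  then show ?thesis unfolding eq card_image[OF inj] by (simp add: card_Pow)
qed

lemma fiber_sum:
  "(\<Sum>\<gamma>\<in>Pow {..<d}. real (card {\<eta>\<in>Pow {..<(d::nat)}. \<eta> \<inter> \<beta> = \<gamma>})) = 2 ^ d"
proof -
  have "(\<Sum>\<gamma>\<in>Pow {..<d}. real (card {\<eta>\<in>Pow {..<d}. \<eta> \<inter> \<beta> = \<gamma>}))
      = (\<Sum>\<gamma>\<in>Pow {..<d}. \<Sum>\<eta>\<in>Pow {..<d}. if \<eta> \<inter> \<beta> = \<gamma> then 1 else 0)"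
    by (simp add: sum.inter_filter[symmetric])
  also have "\<dots> = (\<Sum>\<eta>\<in>Pow {..<d}. \<Sum>\<gamma>\<in>Pow {..<d}. if \<eta> \<inter> \<beta> = \<gamma> then 1 else 0)"
    by (rule sum.swap)
  also have "\<dots> = (\<Sum>\<eta>\<in>Pow {..<d}. (1::real))"
    by (intro sum.cong refl) (auto simp: sum.delta)
  also have "\<dots> = 2 ^ d" by (simp add: card_Pow)
  finally show ?thesis .
qed



lemma per_user:
  assumes "\<beta> \<subseteq> {..<d}"
  shows "(\<Sum>\<alpha>\<in>Pow \<beta>. (-1::real) ^ card (J \<inter> \<alpha>) * (\<Sum>\<eta>\<in>{\<eta>\<in>Pow {..<d}. \<eta> \<inter> \<beta> = \<gamma>}. (-1) ^ card (\<alpha> \<inter> \<eta>)))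
         = (if J \<inter> \<beta> = \<gamma> then 2 ^ d else 0)"
proof -
  let ?E = "{\<eta>\<in>Pow {..<d}. \<eta> \<inter> \<beta> = \<gamma>}"
  have finb: "finite \<beta>" using assms finite_subset by blast
  have "(\<Sum>\<alpha>\<in>Pow \<beta>. (-1::real) ^ card (J \<inter> \<alpha>) * (\<Sum>\<eta>\<in>?E. (-1) ^ card (\<alpha> \<inter> \<eta>)))
      = (\<Sum>\<alpha>\<in>Pow \<beta>. \<Sum>\<eta>\<in>?E. (-1::real) ^ (card (J \<inter> \<alpha>) + card (\<eta> \<inter> \<alpha>)))"
    by (simp add: sum_distrib_left power_add Int_commute)
  also have "\<dots> = (\<Sum>\<eta>\<in>?E. \<Sum>\<alpha>\<in>Pow \<beta>. (-1::real) ^ (card (J \<inter> \<alpha>) + card (\<eta> \<inter> \<alpha>)))"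
    by (rule sum.swap)
  also have "\<dots> = (\<Sum>\<eta>\<in>?E. if J \<inter> \<beta> = \<gamma> then 2 ^ card \<beta> else 0)"
    by (intro sum.cong refl) (simp add: sign_sum[OF finb])
  also have "\<dots> = (if J \<inter> \<beta> = \<gamma> then 2 ^ d else 0)"
  proof (cases "J \<inter> \<beta> = \<gamma>")
    case True
    then have g: "\<gamma> \<subseteq> \<beta>" by blast
    have cb: "card \<beta> \<le> d" using assms by (metis card_lessThan card_mono finite_lessThan)
    have "(\<Sum>\<eta>\<in>?E. (2::real) ^ card \<beta>) = 2 ^ card \<beta> * 2 ^ (d - card \<beta>)"
      using card_fiber[OF assms g] by simp
    also have "\<dots> = 2 ^ d" using cb by (simp add: power_add[symmetric])
    finally show ?thesis using True by simp
  qed simp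
  finally show ?thesis .
qed

lemma recon_exact:
  assumes N: "0 < N" and j: "\<forall>i<N. j i \<subseteq> {..<d}" and b: "\<beta> \<subseteq> {..<d}"
  shows "marginal d (hist N j) \<beta> \<gamma> =
         recon_marginal d (\<lambda>\<alpha>. 2 powr (- (real d / 2)) * ((\<Sum>i<N. (-1::real) ^ card (j i \<inter> \<alpha>)) / real N)) \<beta> \<gamma>"
proof -
  let ?E = "{\<eta>\<in>Pow {..<d}. \<eta> \<inter> \<beta> = \<gamma>}"
  define c where "c = (2::real) powr (- (real d / 2))"
  have "c * c = 2 powr (- real d)" unfolding c_def by (subst powr_add[symmetric]) simp
  also have "\<dots> = 1 / 2 ^ d" by (simp add: powr_minus powr_realpow divide_inverse)
  finally have cc: "c * c = 1 / 2 ^ d" .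
  have finE: "finite ?E" by simp
  have L: "marginal d (hist N j) \<beta> \<gamma> = (\<Sum>i<N. if j i \<inter> \<beta> = \<gamma> then 1 else 0) / real N"
  proof -
    have "marginal d (hist N j) \<beta> \<gamma> = (\<Sum>\<eta>\<in>?E. (\<Sum>i<N. if j i = \<eta> then 1 else 0) / real N)"
      unfolding marginal_def hist_def by (simp add: sum.inter_filter[symmetric])
    also have "\<dots> = (\<Sum>i<N. \<Sum>\<eta>\<in>?E. if j i = \<eta> then 1 else 0) / real N"
      by (subst sum.swap) (simp add: sum_divide_distrib)
    also have "(\<Sum>i<N. \<Sum>\<eta>\<in>?E. if j i = \<eta> then 1 else 0) = (\<Sum>i<N. if j i \<inter> \<beta> = \<gamma> then (1::real) else 0)"
    proof (rule sum.cong[OF refl])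
      fix i assume "i \<in> {..<N}"
      then have "j i \<in> Pow {..<d}" using j by auto
      then show "(\<Sum>\<eta>\<in>?E. if j i = \<eta> then 1 else 0) = (if j i \<inter> \<beta> = \<gamma> then (1::real) else 0)"
        using finE by (simp add: sum.delta)
    qed
    finally show ?thesis .
  qed
  let ?K = "\<lambda>\<alpha>. (\<Sum>\<eta>\<in>?E. (-1::real) ^ card (\<alpha> \<inter> \<eta>))"
  let ?S = "\<lambda>\<alpha>. (\<Sum>i<N. (-1::real) ^ card (j i \<inter> \<alpha>))"
  have hk: "(\<Sum>\<eta>\<in>?E. had d \<alpha> \<eta>) = c * ?K \<alpha>" for \<alpha>
    unfolding had_def c_def[symmetric] by (simp add: sum_distrib_left)
  have "recon_marginal d (\<lambda>\<alpha>. c * (?S \<alpha> / real N)) \<beta> \<gamma>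
      = (\<Sum>\<alpha>\<in>Pow \<beta>. (c * c / real N) * (?S \<alpha> * ?K \<alpha>))"
    unfolding recon_marginal_def hk by (intro sum.cong refl) simp
  also have "\<dots> = (c * c / real N) * (\<Sum>\<alpha>\<in>Pow \<beta>. \<Sum>i<N. (-1::real) ^ card (j i \<inter> \<alpha>) * ?K \<alpha>)"
    unfolding sum_distrib_right by (rule sum_distrib_left[symmetric])
  also have "\<dots> = (c * c / real N) * (\<Sum>i<N. \<Sum>\<alpha>\<in>Pow \<beta>. (-1::real) ^ card (j i \<inter> \<alpha>) * ?K \<alpha>)"
    by (subst sum.swap) (rule refl)
  also have "\<dots> = (c * c / real N) * (\<Sum>i<N. if j i \<inter> \<beta> = \<gamma> then 2 ^ d else 0)"
    by (rule arg_cong[where f="\<lambda>x. c * c / real N * x"], rule sum.cong[OF refl], rule per_user[OF b])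
  also have "\<dots> = (\<Sum>i<N. if j i \<inter> \<beta> = \<gamma> then 1 else 0) / real N"
  proof -
    have "(\<Sum>i<N. if j i \<inter> \<beta> = \<gamma> then (2::real) ^ d else 0) = 2 ^ d * (\<Sum>i<N. if j i \<inter> \<beta> = \<gamma> then 1 else 0)"
      by (subst sum_distrib_left) (intro sum.cong refl, simp)
    then show ?thesis unfolding cc by simp
  qed
  finally show ?thesis using L unfolding c_def by simp
qed



lemma coef_set_fin: "finite (coef_set d k)"
  unfolding coef_set_def by (rule finite_subset[of _ "Pow {..<d}"]) auto

lemma coef_set_ne: "1 \<le> k \<Longrightarrow> k \<le> d \<Longrightarrow> coef_set d k \<noteq> {}"
proof -
  assume "1 \<le> k" "k \<le> d"
  then have "{0} \<in> coef_set d k" unfolding coef_set_def by auto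
  then show ?thesis by blast
qed

lemma card_coef_set: "card (coef_set d k) = num_coefs d k"
proof -
  have eq: "coef_set d k = (\<Union>l\<in>{1..k}. {B. B \<subseteq> {..<d} \<and> card B = l})"
    unfolding coef_set_def by auto
  have "card (coef_set d k) = (\<Sum>l\<in>{1..k}. card {B. B \<subseteq> {..<d} \<and> card B = l})"
    unfolding eq by (rule card_UN_disjoint) (auto intro: finite_subset[of _ "Pow {..<d}"])
  also have "\<dots> = num_coefs d k"
    unfolding num_coefs_def by (intro sum.cong refl) (simp add: n_subsets)
  finally show ?thesis .
qed

lemma exp2_partial:
  assumes that: "finite I"
  shows "(\<Sum>l\<in>I. (2::real) ^ l / fact l) \<le> exp 2"
proof -
  have s: "(\<lambda>n. (2::real) ^ n / fact n) sums exp 2"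
    using exp_converges[of "2::real"] by (simp add: divide_inverse_commute scaleR_conv_of_real)
  have "(\<Sum>l\<in>I. (2::real) ^ l / fact l) \<le> suminf (\<lambda>n. (2::real) ^ n / fact n)"
    by (rule sum_le_suminf) (use s that in \<open>auto simp: sums_iff\<close>)
  then show ?thesis using s by (simp add: sums_iff)
qed

lemma comb_bound:
  assumes "1 \<le> k" "k \<le> d"
  shows "2 ^ k * real (num_coefs d k) \<le> exp 2 * real d ^ k"
proof -
  have trm: "2 ^ k * real (d choose l) \<le> real d ^ k * (2 ^ l / fact l)" if l: "l \<in> {1..k}" for l
  proof -
    have f: "real (d choose l) * fact l \<le> real d ^ l"
      using binomial_fact_pow[of d l] by (metis of_nat_fact of_nat_le_iff of_nat_mult of_nat_power)
    have p: "(2::real) ^ (k - l) \<le> real d ^ (k - l)"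
    proof (cases "d \<ge> 2")
      case True then show ?thesis by (intro power_mono) auto
    next
      case False then have "k - l = 0" using l assms by auto
      then show ?thesis by simp
    qed
    have kl: "k = l + (k - l)" using l by auto
    have "2 ^ k * real (d choose l) = 2 ^ l * 2 ^ (k - l) * real (d choose l)"
      by (subst kl) (simp add: power_add)
    also have "\<dots> \<le> 2 ^ l * real d ^ (k - l) * (real d ^ l / fact l)"
      using f p by (intro mult_mono) (auto simp: field_simps)
    also have "\<dots> = real d ^ k * (2 ^ l / fact l)"
    proof -
      have "real d ^ k = real d ^ (k - l) * real d ^ l"
        by (subst kl) (simp add: power_add mult.commute)
      then show ?thesis by simp
    qed
    finally show ?thesis .
  qed
  have "2 ^ k * real (num_coefs d k) = (\<Sum>l\<in>{1..k}. 2 ^ k * real (d choose l))"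
    unfolding num_coefs_def by (simp add: sum_distrib_left)
  also have "\<dots> \<le> (\<Sum>l\<in>{1..k}. real d ^ k * (2 ^ l / fact l))"
    by (rule sum_mono) (rule trm)
  also have "\<dots> = real d ^ k * (\<Sum>l\<in>{1..k}. 2 ^ l / fact l)"
    by (simp add: sum_distrib_left)
  also have "\<dots> \<le> real d ^ k * exp 2"
    by (intro mult_left_mono exp2_partial) auto
  finally show ?thesis by (simp add: mult.commute)
qed

lemma user_support:
  assumes "1 \<le> k" "k \<le> d" "x \<in> set_pmf (inpht_user d k e J)"
  shows "x \<in> coef_set d k \<times> {1, -1}"
proof -
  obtain l v where x: "x = (l, v)" by (cases x)
  have "pmf (inpht_user d k e J) (l, v) \<noteq> 0" using assms(3) x by (simp add: set_pmf_iff)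
  then have "l \<in> coef_set d k" "qf e J l v \<noteq> 0"
    unfolding pmf_user using coef_set_fin coef_set_ne[OF assms(1,2)] by (auto simp: indicator_def)
  then show ?thesis unfolding x qf_def using sgn_coef_cases[of J l] by (auto split: if_splits)
qed

lemma user_fin: "1 \<le> k \<Longrightarrow> k \<le> d \<Longrightarrow> finite (set_pmf (inpht_user d k e J))"
  using user_support coef_set_fin by (metis finite.emptyI finite.insertI finite_SigmaI finite_subset subsetI)

lemma user_expect:
  assumes "1 \<le> k" "k \<le> d"
  shows "measure_pmf.expectation (inpht_user d k e J) g =
     (\<Sum>l\<in>coef_set d k. p_r e * g (l, sgn_coef J l) + (1 - p_r e) * g (l, - sgn_coef J l)) / real (card (coef_set d k))"
proof -
  let ?A = "coef_set d k"
  let ?T = "real (card ?A)"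
  have fin: "finite ?A" by (rule coef_set_fin)
  have ne: "?A \<noteq> {}" using coef_set_ne assms by blast
  have "measure_pmf.expectation (inpht_user d k e J) g = (\<Sum>x\<in>?A \<times> {1, -1}. g x * pmf (inpht_user d k e J) x)"
    by (rule integral_measure_pmf_real) (use fin user_support[OF assms] in auto)
  also have "\<dots> = (\<Sum>l\<in>?A. \<Sum>v\<in>{1, -1}. g (l, v) * pmf (inpht_user d k e J) (l, v))"
    by (subst sum.cartesian_product) (simp add: case_prod_unfold)
  also have "\<dots> = (\<Sum>l\<in>?A. (p_r e * g (l, sgn_coef J l) + (1 - p_r e) * g (l, - sgn_coef J l)) / ?T)"
  proof (rule sum.cong[OF refl])
    fix l assume l: "l \<in> ?A"
    have pl: "pmf (pmf_of_set ?A) l = 1 / ?T" using l fin ne by simp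
    have T0: "?T > 0" using fin ne by (simp add: card_gt_0_iff)
    show "(\<Sum>v\<in>{1, -1}. g (l, v) * pmf (inpht_user d k e J) (l, v)) =
          (p_r e * g (l, sgn_coef J l) + (1 - p_r e) * g (l, - sgn_coef J l)) / ?T"
      unfolding pmf_user pl qf_def using sgn_coef_cases[of J l] T0
      by (elim disjE) (simp_all add: field_simps)
  qed
  also have "\<dots> = (\<Sum>l\<in>?A. p_r e * g (l, sgn_coef J l) + (1 - p_r e) * g (l, - sgn_coef J l)) / ?T"
    by (simp add: sum_divide_distrib)
  finally show ?thesis .
qed



lemma c0_sq: "(2::real) powr (- (real d / 2)) * 2 powr (- (real d / 2)) = 1 / 2 ^ d"
proof -
  have "(2::real) powr (- (real d / 2)) * 2 powr (- (real d / 2)) = 2 powr (- real d)"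
    by (subst powr_add[symmetric]) simp
  also have "\<dots> = 1 / 2 ^ d" by (simp add: powr_minus powr_realpow divide_inverse)
  finally show ?thesis .
qed

lemma err_bound:
  assumes N: "0 < N" and j: "\<forall>i<N. j i \<subseteq> {..<d}" and b: "\<beta> \<subseteq> {..<d}"
  and bnd: "\<forall>\<alpha>\<in>Pow \<beta>. \<bar>theta_hat d e N R \<alpha> - 2 powr (- (real d / 2)) * ((\<Sum>i<N. (-1::real) ^ card (j i \<inter> \<alpha>)) / real N)\<bar>
              \<le> 2 powr (- (real d / 2)) * M"
  shows "marginal_l1_err d e N j R \<beta> \<le> 2 ^ card \<beta> * M"
proof -
  define c0 :: real where "c0 = 2 powr (- (real d / 2))"
  define th where "th \<alpha> = c0 * ((\<Sum>i<N. (-1::real) ^ card (j i \<inter> \<alpha>)) / real N)" for \<alpha>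
  define E where "E \<gamma> = {\<eta>\<in>Pow {..<d}. \<eta> \<inter> \<beta> = \<gamma>}" for \<gamma>
  define K where "K \<alpha> \<gamma> = (\<Sum>\<eta>\<in>E \<gamma>. had d \<alpha> \<eta>)" for \<alpha> \<gamma>
  have c0p: "c0 > 0" unfolding c0_def by simp
  have bnd': "\<bar>theta_hat d e N R \<alpha> - th \<alpha>\<bar> \<le> c0 * M" if "\<alpha> \<in> Pow \<beta>" for \<alpha>
    using bnd that unfolding th_def c0_def by blast
  have M0: "0 \<le> M"
  proof -
    have "0 \<le> c0 * M" using bnd'[of "{}"] by (meson abs_ge_zero order_trans Pow_bottom)
    then show ?thesis using c0p by (simp add: zero_le_mult_iff)
  qed
  have finb: "finite \<beta>" using b finite_subset by blast
  have Kb: "\<bar>K \<alpha> \<gamma>\<bar> \<le> c0 * real (card (E \<gamma>))" for \<alpha> \<gamma>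
  proof -
    have "\<bar>K \<alpha> \<gamma>\<bar> \<le> (\<Sum>\<eta>\<in>E \<gamma>. \<bar>had d \<alpha> \<eta>\<bar>)" unfolding K_def by (rule sum_abs)
    also have "\<dots> = (\<Sum>\<eta>\<in>E \<gamma>. c0)"
      unfolding had_def c0_def by (intro sum.cong refl) (simp add: abs_mult)
    finally show ?thesis by (simp add: mult.commute)
  qed
  have diff: "\<bar>marginal d (hist N j) \<beta> \<gamma> - recon_marginal d (theta_hat d e N R) \<beta> \<gamma>\<bar>
        \<le> 2 ^ card \<beta> * (c0 * M) * (c0 * real (card (E \<gamma>)))" for \<gamma>
  proof -
    have "marginal d (hist N j) \<beta> \<gamma> - recon_marginal d (theta_hat d e N R) \<beta> \<gamma>
        = recon_marginal d th \<beta> \<gamma> - recon_marginal d (theta_hat d e N R) \<beta> \<gamma>"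
      using recon_exact[OF N j b, of \<gamma>] unfolding th_def c0_def by simp
    also have "\<dots> = (\<Sum>\<alpha>\<in>Pow \<beta>. (th \<alpha> - theta_hat d e N R \<alpha>) * K \<alpha> \<gamma>)"
      unfolding recon_marginal_def K_def E_def by (simp add: sum_subtractf left_diff_distrib)
    finally have eq: "marginal d (hist N j) \<beta> \<gamma> - recon_marginal d (theta_hat d e N R) \<beta> \<gamma>
        = (\<Sum>\<alpha>\<in>Pow \<beta>. (th \<alpha> - theta_hat d e N R \<alpha>) * K \<alpha> \<gamma>)" .
    have "\<bar>\<Sum>\<alpha>\<in>Pow \<beta>. (th \<alpha> - theta_hat d e N R \<alpha>) * K \<alpha> \<gamma>\<bar>
        \<le> (\<Sum>\<alpha>\<in>Pow \<beta>. \<bar>(th \<alpha> - theta_hat d e N R \<alpha>) * K \<alpha> \<gamma>\<bar>)" by (rule sum_abs)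
    also have "\<dots> \<le> (\<Sum>\<alpha>\<in>Pow \<beta>. (c0 * M) * (c0 * real (card (E \<gamma>))))"
    proof (rule sum_mono)
      fix \<alpha> assume a: "\<alpha> \<in> Pow \<beta>"
      have "\<bar>th \<alpha> - theta_hat d e N R \<alpha>\<bar> \<le> c0 * M" using bnd'[OF a] by (simp add: abs_minus_commute)
      then show "\<bar>(th \<alpha> - theta_hat d e N R \<alpha>) * K \<alpha> \<gamma>\<bar> \<le> (c0 * M) * (c0 * real (card (E \<gamma>)))"
        unfolding abs_mult using Kb by (intro mult_mono) auto
    qed
    also have "\<dots> = 2 ^ card \<beta> * (c0 * M) * (c0 * real (card (E \<gamma>)))"
      using finb by (simp add: card_Pow)
    finally show ?thesis unfolding eq .
  qed
  have "marginal_l1_err d e N j R \<beta> \<le> (\<Sum>\<gamma>\<in>Pow {..<d}. 2 ^ card \<beta> * (c0 * M) * (c0 * real (card (E \<gamma>))))"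
    unfolding marginal_l1_err_def by (rule sum_mono) (rule diff)
  also have "\<dots> = 2 ^ card \<beta> * M * (c0 * c0) * (\<Sum>\<gamma>\<in>Pow {..<d}. real (card (E \<gamma>)))"
    by (simp add: sum_distrib_left algebra_simps)
  also have "\<dots> = 2 ^ card \<beta> * M"
    unfolding E_def fiber_sum c0_def c0_sq by simp
  finally show ?thesis .
qed



lemma theta_err:
  fixes R :: "nat \<Rightarrow> nat set \<times> int" and T a \<mu> :: real
  assumes a0: "\<alpha> \<noteq> {}" and N: "0 < N" and T: "0 < T" and q: "0 < 2 * p_r e - 1"
  and Y: "real N / (2 * T) < (\<Sum>i<N. if fst (R i) = \<alpha> then 1 else 0)"
  and W: "\<bar>\<Sum>i<N. if fst (R i) = \<alpha> then (real_of_int (snd (R i)) - (2 * p_r e - 1) * \<mu>) / 2 else 0\<bar> < a"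
  shows "\<bar>theta_hat d e N R \<alpha> - 2 powr (- (real d / 2)) * \<mu>\<bar>
         \<le> 2 powr (- (real d / 2)) * (4 * a * T / (real N * (2 * p_r e - 1)))"
proof -
  define c0 :: real where "c0 = 2 powr (- (real d / 2))"
  define q where "q = 2 * p_r e - 1"
  define S where "S = {i\<in>{..<N}. fst (R i) = \<alpha>}"
  define X where "X = (\<Sum>i\<in>S. real_of_int (snd (R i)))"
  have c0p: "0 < c0" unfolding c0_def by simp
  have qp: "0 < q" using q unfolding q_def .
  have cS: "real (card S) = (\<Sum>i<N. if fst (R i) = \<alpha> then 1 else 0)"
    unfolding S_def by (simp add: sum.inter_filter[symmetric])
  have Sgt: "real N / (2 * T) < real (card S)" using Y cS by simp
  have NT: "0 < real N / (2 * T)" using N T by simp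
  have Spos: "0 < real (card S)" using Sgt NT by linarith
  then have Sne: "S \<noteq> {}" by auto
  have Wsum: "(\<Sum>i<N. if fst (R i) = \<alpha> then (real_of_int (snd (R i)) - q * \<mu>) / 2 else 0)
        = (X - q * \<mu> * real (card S)) / 2"
  proof -
    have "(\<Sum>i<N. if fst (R i) = \<alpha> then (real_of_int (snd (R i)) - q * \<mu>) / 2 else 0)
        = (\<Sum>i\<in>S. (real_of_int (snd (R i)) - q * \<mu>) / 2)"
      unfolding S_def by (rule sum.inter_filter[symmetric]) simp
    also have "\<dots> = (X - q * \<mu> * real (card S)) / 2"
      unfolding X_def by (simp add: sum_divide_distrib[symmetric] sum_subtractf)
    finally show ?thesis .
  qed
  have W': "\<bar>X - q * \<mu> * real (card S)\<bar> < 2 * a" using W Wsum unfolding q_def by simp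
  have th: "theta_hat d e N R \<alpha> = c0 * (X / real (card S)) / q"
    unfolding theta_hat_def Let_def using a0 Sne unfolding S_def X_def c0_def q_def by simp
  have "theta_hat d e N R \<alpha> - c0 * \<mu> = c0 * ((X - q * \<mu> * real (card S)) / (real (card S) * q))"
    unfolding th using Spos qp by (simp add: field_simps)
  then have "\<bar>theta_hat d e N R \<alpha> - c0 * \<mu>\<bar> = c0 * (\<bar>X - q * \<mu> * real (card S)\<bar> / (real (card S) * q))"
    using c0p Spos qp by (simp add: abs_mult abs_divide)
  also have "\<dots> \<le> c0 * (2 * a / (real N / (2 * T) * q))"
  proof (intro mult_left_mono)
    show "\<bar>X - q * \<mu> * real (card S)\<bar> / (real (card S) * q) \<le> 2 * a / (real N / (2 * T) * q)"
    proof (rule frac_le)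
      show "0 \<le> 2 * a" using W' by linarith
      show "\<bar>X - q * \<mu> * real (card S)\<bar> \<le> 2 * a" using W' by linarith
      show "0 < real N / (2 * T) * q" using NT qp by (rule mult_pos_pos)
      show "real N / (2 * T) * q \<le> real (card S) * q" using Sgt qp by (intro mult_right_mono) auto
    qed
  qed (use c0p in simp)
  also have "\<dots> = c0 * (4 * a * T / (real N * q))"
    using T by (simp add: field_simps)
  finally show ?thesis unfolding c0_def q_def .
qed



lemma q_lower:
  assumes "0 < e" "e \<le> 1"
  shows "e / (exp 1 + 1) \<le> 2 * p_r e - 1"
proof -
  have ne: "0 < 1 + exp e" using exp_gt_zero[of e] by linarith
  have eq: "2 * p_r e - 1 = (exp e - 1) / (1 + exp e)"
    unfolding p_r_def using ne by (simp add: field_simps)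
  have "e / (exp 1 + 1) \<le> e / (1 + exp e)"
    using assms ne by (intro divide_left_mono) (auto intro!: mult_pos_pos add_pos_pos)
  also have "\<dots> \<le> (exp e - 1) / (1 + exp e)"
  proof (rule divide_right_mono)
    show "e \<le> exp e - 1" using exp_ge_add_one_self[of e] by linarith
  qed (use ne in simp)
  finally show ?thesis unfolding eq .
qed

lemma sqrtL:
  assumes "1 \<le> (T::real)"
  shows "sqrt (ln (6 * T)) \<le> 6 * (1 + ln T)"
proof -
  have lT: "0 \<le> ln T" using assms by simp
  have l6: "ln (6::real) \<le> 5" using ln_le_minus_one[of 6] by simp
  have eq: "ln (6 * T) = ln 6 + ln T" using assms by (simp add: ln_mult)
  have L0: "0 \<le> ln (6 * T)" using assms by simp
  have "sqrt (ln (6 * T)) \<le> 1 + ln (6 * T)"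
  proof (cases "ln (6 * T) \<le> 1")
    case True
    then have "sqrt (ln (6 * T)) \<le> 1" by simp
    then show ?thesis using L0 by linarith
  next
    case False
    then have x1: "1 \<le> ln (6 * T)" by simp
    have "ln (6 * T) \<le> ln (6 * T) * ln (6 * T)"
      using mult_right_mono[OF x1, of "ln (6 * T)"] x1 by simp
    then have "sqrt (ln (6 * T)) \<le> sqrt (ln (6 * T) * ln (6 * T))" by (rule real_sqrt_le_mono)
    then have "sqrt (ln (6 * T)) \<le> ln (6 * T)" using x1 by simp
    then show ?thesis by linarith
  qed
  also have "\<dots> = 1 + ln 6 + ln T" unfolding eq by simp
  also have "\<dots> \<le> 6 + ln T" using l6 by simp
  also have "\<dots> \<le> 6 * (1 + ln T)" using lT by simp
  finally show ?thesis .
qed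

lemma pow_bound:
  assumes "1 \<le> k" "k \<le> d"
  shows "2 ^ k * sqrt (real (num_coefs d k)) \<le> exp 1 * (2 * real d) powr (real k / 2)"
proof -
  have d0: "0 < real d" using assms by simp
  have pw: "(2 * real d) powr (real k / 2) = sqrt (2 ^ k * real d ^ k)"
  proof -
    have "(2 * real d) powr (real k / 2) = ((2 * real d) powr real k) powr (1/2)"
      by (simp add: powr_powr)
    also have "\<dots> = sqrt ((2 * real d) ^ k)"
      using d0 by (simp add: powr_realpow powr_half_sqrt)
    finally show ?thesis by (simp add: power_mult_distrib)
  qed
  have e2: "exp (2::real) = exp 1 * exp 1" by (simp add: exp_add[symmetric])
  have "2 ^ k * sqrt (real (num_coefs d k)) = sqrt (2 ^ k * (2 ^ k * real (num_coefs d k)))"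
    by (simp add: real_sqrt_mult power_mult_distrib[symmetric] real_sqrt_power)
  also have "\<dots> \<le> sqrt (2 ^ k * (exp 1 * exp 1 * real d ^ k))"
    using comb_bound[OF assms] e2 by (intro real_sqrt_le_mono mult_left_mono) auto
  also have "\<dots> = exp 1 * sqrt (2 ^ k * real d ^ k)"
    by (simp add: real_sqrt_mult algebra_simps)
  finally show ?thesis unfolding pw .
qed



lemma user_expect_single:
  assumes "1 \<le> k" "k \<le> d" "\<alpha> \<in> coef_set d k" "\<And>l v. l \<noteq> \<alpha> \<Longrightarrow> g (l, v) = 0"
  shows "measure_pmf.expectation (inpht_user d k e J) g =
     (p_r e * g (\<alpha>, sgn_coef J \<alpha>) + (1 - p_r e) * g (\<alpha>, - sgn_coef J \<alpha>)) / real (card (coef_set d k))"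
proof -
  have "(\<Sum>l\<in>coef_set d k. p_r e * g (l, sgn_coef J l) + (1 - p_r e) * g (l, - sgn_coef J l))
      = (\<Sum>l\<in>coef_set d k. if l = \<alpha> then p_r e * g (\<alpha>, sgn_coef J \<alpha>) + (1 - p_r e) * g (\<alpha>, - sgn_coef J \<alpha>) else 0)"
    by (rule sum.cong[OF refl]) (auto simp: assms(4))
  also have "\<dots> = p_r e * g (\<alpha>, sgn_coef J \<alpha>) + (1 - p_r e) * g (\<alpha>, - sgn_coef J \<alpha>)"
    using assms(3) coef_set_fin by (simp add: sum.delta)
  finally show ?thesis using user_expect[OF assms(1,2), of e J g] by simp
qed

lemma sgn_real: "real_of_int (sgn_coef J l) = (-1) ^ card (J \<inter> l)"
  unfolding sgn_coef_def by simp

lemma sq_half_le1: "\<bar>x::real\<bar> \<le> 2 \<Longrightarrow> (x / 2) ^ 2 \<le> 1"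
  by (simp add: abs_square_le_1 abs_divide)

lemma part2_fixed:
  assumes k1: "1 \<le> k" and kd: "k \<le> d" and e0: "0 < e" and e1: "e \<le> 1"
  shows "\<exists>N0. \<forall>N \<ge> N0. \<forall>j. (\<forall>i<N. j i \<subseteq> {..<d}) \<longrightarrow>
     measure_pmf.prob (inpht_reports d k e N j)
       {R. \<forall>\<beta>. \<beta> \<subseteq> {..<d} \<and> card \<beta> = k \<longrightarrow>
          marginal_l1_err d e N j R \<beta>
            \<le> (48 * (exp 1 + 1) * exp 1) * (1 + ln (real (num_coefs d k))) ^ 1
                * (2 * real d) powr (real k / 2) / (e * sqrt (real N))} \<ge> 1/2"
proof -
  define A where "A = coef_set d k"
  define T where "T = real (card A)"
  define L where "L = ln (6 * T)"
  have finA: "finite A" unfolding A_def by (rule coef_set_fin)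
  have neA: "A \<noteq> {}" unfolding A_def using coef_set_ne k1 kd by blast
  have T1: "1 \<le> T" unfolding T_def using finA neA by (simp add: Suc_leI card_gt_0_iff)
  have T0: "0 < T" using T1 by simp
  have L0: "0 < L" unfolding L_def using T1 by simp
  have Tnum: "T = real (num_coefs d k)" unfolding T_def A_def card_coef_set ..
  define N0 where "N0 = nat \<lceil>16 * T * L\<rceil> + 1"
  show ?thesis
  proof (intro exI allI impI)
    fix N and j :: "nat \<Rightarrow> nat set"
    assume NN0: "N0 \<le> N" and j: "\<forall>i<N. j i \<subseteq> {..<d}"
    have Npos: "0 < N" using NN0 unfolding N0_def by simp
    have NTL: "16 * T * L \<le> real N"
    proof -
      have "16 * T * L \<le> real (nat \<lceil>16 * T * L\<rceil>)" by (rule real_nat_ceiling_ge)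
      also have "\<dots> \<le> real N"
      proof (rule of_nat_mono)
        show "nat \<lceil>16 * T * L\<rceil> \<le> N" using NN0 unfolding N0_def by linarith
      qed
      finally show ?thesis .
    qed
    define q where "q = 2 * p_r e - 1"
    have qlow: "e / (exp 1 + 1) \<le> q" unfolding q_def by (rule q_lower[OF e0 e1])
    have qpos: "0 < q"
    proof -
      have "0 < e / (exp 1 + 1)" using e0 by (simp add: add_pos_pos)
      then show ?thesis using qlow by linarith
    qed
    have q1: "q \<le> 1" unfolding q_def using p_r_bounds[of e] by simp
    define ps where "ps i = inpht_user d k e (j i)" for i
    define P where "P = Pi_pmf {..<N} ({}, 0) ps"
    have P_eq: "inpht_reports d k e N j = P" unfolding P_def ps_def inpht_reports_def ..
    define \<mu> where "\<mu> \<alpha> = (\<Sum>i<N. (-1::real) ^ card (j i \<inter> \<alpha>)) / real N" for \<alpha>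
    have mu1: "\<bar>\<mu> \<alpha>\<bar> \<le> 1" for \<alpha>
    proof -
      have "\<bar>\<Sum>i<N. (-1::real) ^ card (j i \<inter> \<alpha>)\<bar> \<le> (\<Sum>i<N. \<bar>(-1::real) ^ card (j i \<inter> \<alpha>)\<bar>)" by (rule sum_abs)
      also have "\<dots> = real N" by simp
      finally show ?thesis unfolding \<mu>_def using Npos by (simp add: abs_divide)
    qed
    have qmu: "\<bar>q * \<mu> \<alpha>\<bar> \<le> 1" for \<alpha>
      using mu1[of \<alpha>] qpos q1 by (simp add: abs_mult mult_le_one)
    have sum_s: "(\<Sum>i<N. (-1::real) ^ card (j i \<inter> \<alpha>)) = real N * \<mu> \<alpha>" for \<alpha>
      unfolding \<mu>_def using Npos by simp
    define Yf where "Yf \<alpha> x = (if fst x = \<alpha> then 1 else 0 :: real)" for \<alpha> and x :: "nat set \<times> int"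
    define Wf where "Wf \<alpha> x = (if fst x = \<alpha> then (real_of_int (snd x) - q * \<mu> \<alpha>) / 2 else 0)"
      for \<alpha> and x :: "nat set \<times> int"
    define a where "a = 2 * sqrt (real N * L / T)"
    define lam where "lam = sqrt (L * T / real N)"
    define BY where "BY \<alpha> = {R. real N / (2 * T) \<le> (\<Sum>i<N. - Yf \<alpha> (R i) - measure_pmf.expectation (ps i) (\<lambda>x. - Yf \<alpha> x))}" for \<alpha>
    define BP where "BP \<alpha> = {R. a \<le> (\<Sum>i<N. Wf \<alpha> (R i) - measure_pmf.expectation (ps i) (Wf \<alpha>))}" for \<alpha>
    define BM where "BM \<alpha> = {R. a \<le> (\<Sum>i<N. - Wf \<alpha> (R i) - measure_pmf.expectation (ps i) (\<lambda>x. - Wf \<alpha> x))}" for \<alpha>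
    have fin_ps: "finite (set_pmf (ps i))" for i unfolding ps_def by (rule user_fin[OF k1 kd])
    have supp: "x \<in> A \<times> {1, -1}" if "x \<in> set_pmf (ps i)" for i x
      using user_support[OF k1 kd] that unfolding ps_def A_def by blast
    have EY: "measure_pmf.expectation (ps i) (\<lambda>x. - Yf \<alpha> x) = - (1 / T)" if "\<alpha> \<in> A" for i \<alpha>
    proof -
      have "measure_pmf.expectation (ps i) (Yf \<alpha>) = 1 / T"
        unfolding ps_def T_def A_def
        by (subst user_expect_single[OF k1 kd, of \<alpha>]) (use that in \<open>auto simp: A_def Yf_def\<close>)
      then show ?thesis by simp
    qed
    have EY2: "measure_pmf.expectation (ps i) (\<lambda>x. (- Yf \<alpha> x) ^ 2) \<le> 1 / T" if "\<alpha> \<in> A" for i \<alpha>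
      unfolding ps_def T_def A_def
      by (subst user_expect_single[OF k1 kd, of \<alpha>]) (use that in \<open>auto simp: A_def Yf_def\<close>)
    have EW: "measure_pmf.expectation (ps i) (Wf \<alpha>) = q * ((-1) ^ card (j i \<inter> \<alpha>) - \<mu> \<alpha>) / (2 * T)"
      if "\<alpha> \<in> A" for i \<alpha>
    proof -
      have "measure_pmf.expectation (ps i) (Wf \<alpha>) =
         (p_r e * ((real_of_int (sgn_coef (j i) \<alpha>) - q * \<mu> \<alpha>) / 2)
          + (1 - p_r e) * ((- real_of_int (sgn_coef (j i) \<alpha>) - q * \<mu> \<alpha>) / 2)) / T"
        unfolding ps_def T_def A_def
        by (subst user_expect_single[OF k1 kd, of \<alpha>]) (use that in \<open>auto simp: A_def Wf_def\<close>)
      also have "\<dots> = q * ((-1) ^ card (j i \<inter> \<alpha>) - \<mu> \<alpha>) / (2 * T)"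
        unfolding sgn_real q_def using T0 by (simp add: field_simps)
      finally show ?thesis .
    qed
    have EW2: "measure_pmf.expectation (ps i) (\<lambda>x. (Wf \<alpha> x) ^ 2) \<le> 1 / T" if "\<alpha> \<in> A" for i \<alpha>
    proof -
      define s where "s = real_of_int (sgn_coef (j i) \<alpha>)"
      have s1: "\<bar>s\<bar> = 1" unfolding s_def using sgn_coef_cases[of "j i" \<alpha>] by auto
      have b1: "((s - q * \<mu> \<alpha>) / 2) ^ 2 \<le> 1" using s1 qmu[of \<alpha>] by (intro sq_half_le1) linarith
      have b2: "((- s - q * \<mu> \<alpha>) / 2) ^ 2 \<le> 1" using s1 qmu[of \<alpha>] by (intro sq_half_le1) linarith
      have pr: "0 \<le> p_r e" "p_r e \<le> 1" using p_r_bounds[of e] by auto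
      have "measure_pmf.expectation (ps i) (\<lambda>x. (Wf \<alpha> x) ^ 2) =
         (p_r e * ((s - q * \<mu> \<alpha>) / 2) ^ 2 + (1 - p_r e) * ((- s - q * \<mu> \<alpha>) / 2) ^ 2) / T"
        unfolding ps_def T_def A_def s_def
        by (subst user_expect_single[OF k1 kd, of \<alpha>]) (use that in \<open>auto simp: A_def Wf_def\<close>)
      also have "\<dots> \<le> (p_r e * 1 + (1 - p_r e) * 1) / T"
        using T0 pr b1 b2 by (intro divide_right_mono add_mono mult_left_mono) auto
      finally show ?thesis by simp
    qed
    have sumEW: "(\<Sum>i<N. measure_pmf.expectation (ps i) (Wf \<alpha>)) = 0" if "\<alpha> \<in> A" for \<alpha>
    proof -
      have "(\<Sum>i<N. measure_pmf.expectation (ps i) (Wf \<alpha>)) = (\<Sum>i<N. q * ((-1) ^ card (j i \<inter> \<alpha>) - \<mu> \<alpha>) / (2 * T))"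
        using EW[OF that] by simp
      also have "\<dots> = (\<Sum>i<N. q / (2 * T) * ((-1) ^ card (j i \<inter> \<alpha>) - \<mu> \<alpha>))"
        by (rule sum.cong) auto
      also have "\<dots> = q / (2 * T) * (\<Sum>i<N. ((-1) ^ card (j i \<inter> \<alpha>) - \<mu> \<alpha>))"
        by (rule sum_distrib_left[symmetric])
      also have "\<dots> = q / (2 * T) * ((\<Sum>i<N. (-1::real) ^ card (j i \<inter> \<alpha>)) - real N * \<mu> \<alpha>)"
        by (simp add: sum_subtractf)
      also have "\<dots> = 0" using sum_s by simp
      finally show ?thesis .
    qed
    have Wb: "\<bar>Wf \<alpha> x\<bar> \<le> 1" if "x \<in> set_pmf (ps i)" for i x \<alpha>
    proof -
      have "snd x = 1 \<or> snd x = -1" using supp[OF that] by auto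
      then have "\<bar>real_of_int (snd x) - q * \<mu> \<alpha>\<bar> \<le> 2" using qmu[of \<alpha>] by auto
      then show ?thesis unfolding Wf_def by auto
    qed
    have Wbm: "\<bar>- Wf \<alpha> x\<bar> \<le> 1" if "x \<in> set_pmf (ps i)" for i x \<alpha>
      using Wb[OF that] by simp
    have EW2m: "measure_pmf.expectation (ps i) (\<lambda>x. (- Wf \<alpha> x) ^ 2) \<le> 1 / T" if "\<alpha> \<in> A" for i \<alpha>
      using EW2[OF that, of i] by simp
    have Yb: "\<bar>- Yf \<alpha> x\<bar> \<le> 1" for \<alpha> x unfolding Yf_def by simp
    have el: "exp (- L) = 1 / (6 * T)" unfolding L_def using T0 by (simp add: exp_minus inverse_eq_divide)
    have lam1: "lam \<le> 1"
    proof -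
      have LT0: "0 \<le> L * T" using T0 L0 by simp
      have "16 * T * L = 16 * (L * T)" by simp
      then have "L * T \<le> real N" using NTL LT0 by linarith
      then have "L * T / real N \<le> 1" using Npos by simp
      then show ?thesis unfolding lam_def by simp
    qed
    have lam0: "0 \<le> lam" unfolding lam_def using L0 T0 by simp
    have lama: "lam * a = 2 * L"
    proof -
      have "L * T / real N * (real N * L / T) = L ^ 2" using T0 Npos by (simp add: field_simps power2_eq_square)
      then have "lam * sqrt (real N * L / T) = L"
        unfolding lam_def real_sqrt_mult[symmetric] using L0 by simp
      then show ?thesis unfolding a_def by simp
    qed
    have lam2: "lam ^ 2 * (real N * (1 / T)) = L"
    proof -
      have "lam ^ 2 = L * T / real N" unfolding lam_def using L0 T0 by simp
      then show ?thesis using T0 Npos by (simp add: field_simps)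
    qed
    have pBY: "measure_pmf.prob P (BY \<alpha>) \<le> 1 / (6 * T)" if "\<alpha> \<in> A" for \<alpha>
    proof -
      have "measure_pmf.prob P (BY \<alpha>) \<le> exp (- (1/4) * (real N / (2 * T)) + (1/4) ^ 2 * (real N * (1 / T)))"
        unfolding P_def BY_def
        by (rule chernoff[of N ps "\<lambda>i x. - Yf \<alpha> x" "1 / T"], rule fin_ps, rule Yb, rule EY2[OF that], simp, simp)
      also have "\<dots> \<le> exp (- L)"
      proof -
        have "- (1/4) * (real N / (2 * T)) + (1/4) ^ 2 * (real N * (1 / T)) = - (real N / (16 * T))"
          using T0 by (simp add: field_simps)
        also have "\<dots> \<le> - L" using NTL T0 by (simp add: field_simps)
        finally show ?thesis by simp
      qed
      finally show ?thesis unfolding el .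
    qed
    have pBP: "measure_pmf.prob P (BP \<alpha>) \<le> 1 / (6 * T)" if "\<alpha> \<in> A" for \<alpha>
    proof -
      have "measure_pmf.prob P (BP \<alpha>) \<le> exp (- lam * a + lam ^ 2 * (real N * (1 / T)))"
        unfolding P_def BP_def
        by (rule chernoff[of N ps "\<lambda>i x. Wf \<alpha> x" "1 / T"], rule fin_ps, rule Wb, assumption, rule EW2[OF that], rule lam0, rule lam1)
      also have "\<dots> = exp (- L)" using lama lam2 by simp
      finally show ?thesis unfolding el .
    qed
    have pBM: "measure_pmf.prob P (BM \<alpha>) \<le> 1 / (6 * T)" if "\<alpha> \<in> A" for \<alpha>
    proof -
      have "measure_pmf.prob P (BM \<alpha>) \<le> exp (- lam * a + lam ^ 2 * (real N * (1 / T)))"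
        unfolding P_def BM_def
        by (rule chernoff[of N ps "\<lambda>i x. - Wf \<alpha> x" "1 / T"], rule fin_ps, rule Wbm, assumption, rule EW2m[OF that], rule lam0, rule lam1)
      also have "\<dots> = exp (- L)" using lama lam2 by simp
      finally show ?thesis unfolding el .
    qed
    define bad where "bad = (\<Union>\<alpha>\<in>A. BY \<alpha> \<union> BP \<alpha> \<union> BM \<alpha>)"
    have pbad: "measure_pmf.prob P bad \<le> 1 / 2"
    proof -
      have "measure_pmf.prob P bad \<le> (\<Sum>\<alpha>\<in>A. measure_pmf.prob P (BY \<alpha> \<union> BP \<alpha> \<union> BM \<alpha>))"
        unfolding bad_def by (rule measure_pmf.finite_measure_subadditive_finite[OF finA]) auto
      also have "\<dots> \<le> (\<Sum>\<alpha>\<in>A. 3 * (1 / (6 * T)))"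
      proof (rule sum_mono)
        fix \<alpha> assume al: "\<alpha> \<in> A"
        have "measure_pmf.prob P (BY \<alpha> \<union> BP \<alpha> \<union> BM \<alpha>) \<le> measure_pmf.prob P (BY \<alpha> \<union> BP \<alpha>) + measure_pmf.prob P (BM \<alpha>)"
          by (rule measure_Un_le) auto
        also have "\<dots> \<le> measure_pmf.prob P (BY \<alpha>) + measure_pmf.prob P (BP \<alpha>) + measure_pmf.prob P (BM \<alpha>)"
          using measure_Un_le[of "BY \<alpha>" "measure_pmf P" "BP \<alpha>"] by simp
        also have "\<dots> \<le> 3 * (1 / (6 * T))" using pBY[OF al] pBP[OF al] pBM[OF al] by simp
        finally show "measure_pmf.prob P (BY \<alpha> \<union> BP \<alpha> \<union> BM \<alpha>) \<le> 3 * (1 / (6 * T))" .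
      qed
      also have "\<dots> = 1 / 2" using T0 unfolding T_def[symmetric] by (simp add: T_def[symmetric] field_simps)
      finally show ?thesis .
    qed
    define M where "M = 4 * a * T / (real N * q)"
    define C :: real where "C = 48 * (exp 1 + 1) * exp 1"
    have M0: "0 \<le> M" unfolding M_def a_def using T0 qpos L0 by simp
    have final: "2 ^ k * M \<le> C * (1 + ln (real (num_coefs d k))) ^ 1 * (2 * real d) powr (real k / 2) / (e * sqrt (real N))"
    proof -
      define sN where "sN = sqrt (real N)"
      define sT where "sT = sqrt T"
      define sL where "sL = sqrt L"
      have sN: "0 < sN" "sN * sN = real N" unfolding sN_def using Npos by auto
      have sT: "0 < sT" "sT * sT = T" unfolding sT_def using T0 by auto
      have sL: "0 \<le> sL" unfolding sL_def using L0 by auto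
      have r: "sqrt (real N * L / T) = sN * sL / sT"
        unfolding sN_def sL_def sT_def by (simp add: real_sqrt_mult real_sqrt_divide)
      have "a * T / real N = 2 * (sN * sL / sT) * T / real N" unfolding a_def r by simp
      also have "\<dots> = 2 * (sN * sL / sT) * (sT * sT) / (sN * sN)" using sN(2) sT(2) by simp
      also have "\<dots> = 2 * sL * sT / sN" using sN(1) sT(1) by (simp add: field_simps)
      finally have aT: "a * T / real N = 2 * sL * sT / sN" .
      have "2 ^ k * M = 2 ^ k * 4 / q * (a * T / real N)"
        unfolding M_def using Npos qpos by (simp add: field_simps)
      also have "\<dots> = 2 ^ k * 4 / q * (2 * sL * sT / sN)" unfolding aT ..
      also have "\<dots> = 8 / sN * (sL * ((2 ^ k * sT) * (1 / q)))"
        using sN(1) qpos by (simp add: field_simps)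
      also have "\<dots> \<le> 8 / sN * ((6 * (1 + ln T)) * ((exp 1 * (2 * real d) powr (real k / 2)) * ((exp 1 + 1) / e)))"
      proof -
        have b1: "sL \<le> 6 * (1 + ln T)" unfolding sL_def L_def by (rule sqrtL[OF T1])
        have b2: "2 ^ k * sT \<le> exp 1 * (2 * real d) powr (real k / 2)"
          unfolding sT_def Tnum by (rule pow_bound[OF k1 kd])
        have ep: "0 < e / (exp 1 + 1)" using e0 by (simp add: add_pos_pos)
        have "1 / q \<le> 1 / (e / (exp 1 + 1))"
          by (rule divide_left_mono[OF qlow]) (use mult_pos_pos[OF qpos ep] in auto)
        then have b3: "1 / q \<le> (exp 1 + 1) / e" by simp
        have B1: "0 \<le> 6 * (1 + ln T)" using T1 by simp
        have B2: "0 \<le> exp 1 * (2 * real d) powr (real k / 2)" by simp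
        have Y0: "0 \<le> 1 / q" using qpos by simp
        have X0: "0 \<le> 2 ^ k * sT" using sT by simp
        have "(2 ^ k * sT) * (1 / q) \<le> (exp 1 * (2 * real d) powr (real k / 2)) * ((exp 1 + 1) / e)"
          by (rule mult_mono[OF b2 b3 B2 Y0])
        then have "sL * ((2 ^ k * sT) * (1 / q)) \<le> (6 * (1 + ln T)) * ((exp 1 * (2 * real d) powr (real k / 2)) * ((exp 1 + 1) / e))"
          by (rule mult_mono[OF b1 _ B1]) (use X0 Y0 in simp)
        then show ?thesis
          by (rule mult_left_mono) (use sN in simp)
      qed
      also have "\<dots> = C * (1 + ln T) ^ 1 * (2 * real d) powr (real k / 2) / (e * sN)"
        unfolding C_def using e0 sN by (simp add: field_simps)
      finally show ?thesis unfolding Tnum sN_def .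
    qed
    have good: "UNIV - bad \<subseteq> {R. \<forall>\<beta>. \<beta> \<subseteq> {..<d} \<and> card \<beta> = k \<longrightarrow>
          marginal_l1_err d e N j R \<beta>
            \<le> C * (1 + ln (real (num_coefs d k))) ^ 1
                * (2 * real d) powr (real k / 2) / (e * sqrt (real N))}"
    proof (intro subsetI CollectI allI impI)
      fix R \<beta> assume R: "R \<in> UNIV - bad" and b: "\<beta> \<subseteq> {..<d} \<and> card \<beta> = k"
      have bnd: "\<forall>\<alpha>\<in>Pow \<beta>. \<bar>theta_hat d e N R \<alpha> - 2 powr (- (real d / 2)) * ((\<Sum>i<N. (-1::real) ^ card (j i \<inter> \<alpha>)) / real N)\<bar>
              \<le> 2 powr (- (real d / 2)) * M"
      proof
        fix \<alpha> assume al: "\<alpha> \<in> Pow \<beta>"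
        show "\<bar>theta_hat d e N R \<alpha> - 2 powr (- (real d / 2)) * ((\<Sum>i<N. (-1::real) ^ card (j i \<inter> \<alpha>)) / real N)\<bar>
              \<le> 2 powr (- (real d / 2)) * M"
        proof (cases "\<alpha> = {}")
          case True
          then show ?thesis using Npos M0 by (simp add: theta_hat_def)
        next
          case False
          have finb: "finite \<beta>" using b finite_subset by blast
          have aA: "\<alpha> \<in> A" unfolding A_def coef_set_def
            using al b False finb card_mono[OF finb, of \<alpha>] by (auto simp: Suc_leI card_gt_0_iff finite_subset)
          have nY: "R \<notin> BY \<alpha>" and nP: "R \<notin> BP \<alpha>" and nM: "R \<notin> BM \<alpha>" using R aA unfolding bad_def by auto
          have Y: "real N / (2 * T) < (\<Sum>i<N. if fst (R i) = \<alpha> then 1 else 0)"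
          proof -
            have "(\<Sum>i<N. - Yf \<alpha> (R i) - measure_pmf.expectation (ps i) (\<lambda>x. - Yf \<alpha> x))
                = real N / T - (\<Sum>i<N. Yf \<alpha> (R i))"
              using EY[OF aA] by (simp add: sum_subtractf sum_negf)
            then have "real N / T - (\<Sum>i<N. Yf \<alpha> (R i)) < real N / (2 * T)" using nY unfolding BY_def by simp
            moreover have "real N / T - real N / (2 * T) = real N / (2 * T)" using T0 by (simp add: field_simps)
            ultimately show ?thesis unfolding Yf_def by linarith
          qed
          have W: "\<bar>\<Sum>i<N. if fst (R i) = \<alpha> then (real_of_int (snd (R i)) - (2 * p_r e - 1) * \<mu> \<alpha>) / 2 else 0\<bar> < a"
          proof -
            have "(\<Sum>i<N. Wf \<alpha> (R i) - measure_pmf.expectation (ps i) (Wf \<alpha>)) = (\<Sum>i<N. Wf \<alpha> (R i))"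
              using sumEW[OF aA] by (simp add: sum_subtractf)
            moreover have "(\<Sum>i<N. - Wf \<alpha> (R i) - measure_pmf.expectation (ps i) (\<lambda>x. - Wf \<alpha> x)) = - (\<Sum>i<N. Wf \<alpha> (R i))"
              using sumEW[OF aA] by (simp add: sum_subtractf sum_negf)
            ultimately have "(\<Sum>i<N. Wf \<alpha> (R i)) < a" "- (\<Sum>i<N. Wf \<alpha> (R i)) < a"
              using nP nM unfolding BP_def BM_def by auto
            then show ?thesis unfolding Wf_def q_def by linarith
          qed
          have "\<bar>theta_hat d e N R \<alpha> - 2 powr (- (real d / 2)) * \<mu> \<alpha>\<bar>
              \<le> 2 powr (- (real d / 2)) * (4 * a * T / (real N * (2 * p_r e - 1)))"
            by (rule theta_err[OF False Npos T0 _ Y W]) (use qpos in \<open>simp add: q_def\<close>)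
          then show ?thesis unfolding M_def \<mu>_def q_def .
        qed
      qed
      have "marginal_l1_err d e N j R \<beta> \<le> 2 ^ card \<beta> * M"
        by (rule err_bound[OF Npos j _ bnd]) (use b in simp)
      then show "marginal_l1_err d e N j R \<beta>
            \<le> C * (1 + ln (real (num_coefs d k))) ^ 1 * (2 * real d) powr (real k / 2) / (e * sqrt (real N))"
        using final b by simp
    qed
    have "1 / 2 \<le> 1 - measure_pmf.prob P bad" using pbad by simp
    also have "\<dots> = measure_pmf.prob P (UNIV - bad)"
      using measure_pmf.prob_compl[of bad P] by simp
    also have "\<dots> \<le> measure_pmf.prob P {R. \<forall>\<beta>. \<beta> \<subseteq> {..<d} \<and> card \<beta> = k \<longrightarrow>
          marginal_l1_err d e N j R \<beta>
            \<le> C * (1 + ln (real (num_coefs d k))) ^ 1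
                * (2 * real d) powr (real k / 2) / (e * sqrt (real N))}"
      using good by (rule measure_pmf.finite_measure_mono) simp
    finally show "1 / 2 \<le> measure_pmf.prob (inpht_reports d k e N j) {R. \<forall>\<beta>. \<beta> \<subseteq> {..<d} \<and> card \<beta> = k \<longrightarrow>
          marginal_l1_err d e N j R \<beta>
            \<le> (48 * (exp 1 + 1) * exp 1) * (1 + ln (real (num_coefs d k))) ^ 1
                * (2 * real d) powr (real k / 2) / (e * sqrt (real N))}"
      unfolding P_eq C_def .
  qed
qed


theorem theorem4:
  shows "(\<forall>d k \<epsilon>. 0 < \<epsilon> \<longrightarrow> is_LDP \<epsilon> (Pow {..<d}) (inpht_user d k \<epsilon>))
    \<and> (\<exists>C (m::nat) p. C > 0 \<and> p > 0 \<and>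
         (\<forall>d k \<epsilon>. 1 \<le> k \<and> k \<le> d \<and> 0 < \<epsilon> \<and> \<epsilon> \<le> 1 \<longrightarrow>
            (\<exists>N0. \<forall>N \<ge> N0. \<forall>j. (\<forall>i<N. j i \<subseteq> {..<d}) \<longrightarrow>
               measure_pmf.prob (inpht_reports d k \<epsilon> N j)
                 {R. \<forall>\<beta>. \<beta> \<subseteq> {..<d} \<and> card \<beta> = k \<longrightarrow>
                        marginal_l1_err d \<epsilon> N j R \<beta>
                          \<le> C * (1 + ln (real (num_coefs d k))) ^ m
                              * (2 * real d) powr (real k / 2) / (\<epsilon> * sqrt (real N))}
               \<ge> p)))"
proof (intro conjI)
  show "\<forall>d k \<epsilon>. 0 < \<epsilon> \<longrightarrow> is_LDP \<epsilon> (Pow {..<d}) (inpht_user d k \<epsilon>)"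
    by (rule part1)
next
  have C0: "(0::real) < 48 * (exp 1 + 1) * exp 1" by (simp add: add_pos_pos)
  show "\<exists>C (m::nat) p. C > 0 \<and> p > 0 \<and>
         (\<forall>d k \<epsilon>. 1 \<le> k \<and> k \<le> d \<and> 0 < \<epsilon> \<and> \<epsilon> \<le> 1 \<longrightarrow>
            (\<exists>N0. \<forall>N \<ge> N0. \<forall>j. (\<forall>i<N. j i \<subseteq> {..<d}) \<longrightarrow>
               measure_pmf.prob (inpht_reports d k \<epsilon> N j)
                 {R. \<forall>\<beta>. \<beta> \<subseteq> {..<d} \<and> card \<beta> = k \<longrightarrow>
                        marginal_l1_err d \<epsilon> N j R \<beta>
                          \<le> C * (1 + ln (real (num_coefs d k))) ^ m
                              * (2 * real d) powr (real k / 2) / (\<epsilon> * sqrt (real N))}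
               \<ge> p))"
  proof (rule exI[of _ "48 * (exp 1 + 1) * exp 1"], rule exI[of _ "1::nat"], rule exI[of _ "1/2::real"],
         intro conjI)
    show "(0::real) < 48 * (exp 1 + 1) * exp 1" by (rule C0)
    show "(0::real) < 1 / 2" by simp
  next
    show "\<forall>d k \<epsilon>. 1 \<le> k \<and> k \<le> d \<and> 0 < \<epsilon> \<and> \<epsilon> \<le> 1 \<longrightarrow>
            (\<exists>N0. \<forall>N \<ge> N0. \<forall>j. (\<forall>i<N. j i \<subseteq> {..<d}) \<longrightarrow>
               measure_pmf.prob (inpht_reports d k \<epsilon> N j)
                 {R. \<forall>\<beta>. \<beta> \<subseteq> {..<d} \<and> card \<beta> = k \<longrightarrow>
                        marginal_l1_err d \<epsilon> N j R \<beta>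
                          \<le> (48 * (exp 1 + 1) * exp 1) * (1 + ln (real (num_coefs d k))) ^ (1::nat)
                              * (2 * real d) powr (real k / 2) / (\<epsilon> * sqrt (real N))}
               \<ge> 1 / 2)"
      using part2_fixed by blast
  qed
qed

end
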